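(* Let $N\ge 1$, $1\le m\le N$, $\alpha>0$, let $V$ be a real symmetric positive definite $N\times N$ matrix, and let $$A=\begin{pmatrix}0&E\\-V&-\alpha D\end{pmatrix},$$ where $E$ is the $N\times N$ identity matrix and $D$ is the diagonal $N\times N$ matrix with $D_{k,k}=1$ for $k=N-m+1,\dots,N$ and $D_{k,k}=0$ otherwise. Let $H(\psi)=\frac12\sum_{i=1}^N p_i^2+\frac12\sum_{i,j}V(j,i)q_iq_j$ for $\psi=(q,p)\in\mathbb{R}^{2N}$, and let $L_-=\{\psi\in\mathbb{R}^{2N}: H(e^{tA}\psi)\to0 \text{ as } t\to\infty\}$. Then the spectrum of the restriction $A_-$ of $A$ to $L_-$ lies in the open left half-plane, and $\|e^{tA_-}\|_2\to0$ exponentially fast as $t\to\infty$.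
   Context: Points of $\mathbb{R}^{2N}$ are written as column vectors $\psi=(q,p)$ with $q=(q_1,\dots,q_N)^T$, $p=(p_1,\dots,p_N)^T$. It is known (and used here) that $L_-$ is a linear subspace of $\mathbb{R}^{2N}$ invariant under $A$, so $A_-$ is a well-defined linear operator on $L_-$. $\|\cdot\|_2$ is the operator norm induced by the Euclidean norm. *)

theory Defs
  imports Complex_Main "Jordan_Normal_Form.Matrix"
begin

text \<open>Coordinates of \<psi> = (q,p) in R^(2N), 0-based: q_i = \<psi>$i, p_i = \<psi>$(N+i), i < N.\<close>

definition damp_mat :: "nat \<Rightarrow> nat \<Rightarrow> real mat" where
  "damp_mat N m = mat N N (\<lambda>(i,j). if i = j \<and> N - m \<le> i then 1 else 0)"

definition sys_mat :: "nat \<Rightarrow> nat \<Rightarrow> real \<Rightarrow> real mat \<Rightarrow> real mat" where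
  "sys_mat N m \<alpha> V = four_block_mat (0\<^sub>m N N) (1\<^sub>m N) (- V) (- (\<alpha> \<cdot>\<^sub>m damp_mat N m))"

definition symmetric_posdef :: "nat \<Rightarrow> real mat \<Rightarrow> bool" where
  "symmetric_posdef N V \<longleftrightarrow> V \<in> carrier_mat N N \<and> transpose_mat V = V \<and>
     (\<forall>x \<in> carrier_vec N. x \<noteq> 0\<^sub>v N \<longrightarrow> (\<Sum>i<N. \<Sum>j<N. x $ i * V $$ (i,j) * x $ j) > 0)"

definition exp_mat_vec :: "real mat \<Rightarrow> real \<Rightarrow> real vec \<Rightarrow> real vec" where
  "exp_mat_vec A t x = vec (dim_vec x) (\<lambda>i. \<Sum>k. (t ^ k / fact k) * ((A ^\<^sub>m k) *\<^sub>v x) $ i)"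

definition energy :: "nat \<Rightarrow> real mat \<Rightarrow> real vec \<Rightarrow> real" where
  "energy N V \<psi> = (1/2) * (\<Sum>i<N. (\<psi> $ (N + i))\<^sup>2)
     + (1/2) * (\<Sum>i<N. \<Sum>j<N. V $$ (j,i) * \<psi> $ i * \<psi> $ j)"

definition L_minus :: "nat \<Rightarrow> nat \<Rightarrow> real \<Rightarrow> real mat \<Rightarrow> real vec set" where
  "L_minus N m \<alpha> V = {\<psi> \<in> carrier_vec (2*N).
     ((\<lambda>t. energy N V (exp_mat_vec (sys_mat N m \<alpha> V) t \<psi>)) \<longlongrightarrow> 0) at_top}"

definition eucl_norm :: "real vec \<Rightarrow> real" where
  "eucl_norm x = sqrt (\<Sum>i<dim_vec x. (x $ i)\<^sup>2)"

text \<open>Spectrum of the restriction of a real matrix A (n x n) to an A-invariant real subspace L: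
  the eigenvalues of its complexification L + iL.\<close>
definition restr_spectrum :: "nat \<Rightarrow> real mat \<Rightarrow> real vec set \<Rightarrow> complex set" where
  "restr_spectrum n A L = {c. \<exists>z \<in> carrier_vec n. z \<noteq> 0\<^sub>v n
      \<and> vec n (\<lambda>i. Re (z $ i)) \<in> L \<and> vec n (\<lambda>i. Im (z $ i)) \<in> L
      \<and> map_mat complex_of_real A *\<^sub>v z = c \<cdot>\<^sub>v z}"

definition restr_exp_norm :: "real mat \<Rightarrow> real vec set \<Rightarrow> real \<Rightarrow> real" where
  "restr_exp_norm A L t = Sup {eucl_norm (exp_mat_vec A t \<psi>) | \<psi>. \<psi> \<in> L \<and> eucl_norm \<psi> \<le> 1}"

end

theory Submission
  imports Defs "HOL-Analysis.Function_Topology"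
begin



lemma sphere_compact:
  "compact {x::nat\<Rightarrow>real. (\<forall>i. x i \<in> (if i < N then {-1..1} else {0})) \<and> (\<Sum>i<N. (x i)\<^sup>2) = 1}"
proof -
  have "compact (PiE UNIV (\<lambda>i. if i < N then {-1..1::real} else {0}))"
    unfolding compactin_euclidean_iff[symmetric]
    by (subst euclidean_product_topology[symmetric], subst compactin_PiE) auto
  moreover have "closed {x::nat\<Rightarrow>real. (\<Sum>i<N. (x i)\<^sup>2) = 1}"
    by (intro closed_Collect_eq continuous_intros) (auto simp: continuous_on_product_coordinates)
  ultimately have "compact ((PiE UNIV (\<lambda>i. if i < N then {-1..1::real} else {0})) \<inter> {x::nat\<Rightarrow>real. (\<Sum>i<N. (x i)\<^sup>2) = 1})"
    by (rule compact_Int_closed)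
  also have "(PiE UNIV (\<lambda>i. if i < N then {-1..1::real} else {0})) \<inter> {x::nat\<Rightarrow>real. (\<Sum>i<N. (x i)\<^sup>2) = 1}
     = {x::nat\<Rightarrow>real. (\<forall>i. x i \<in> (if i < N then {-1..1} else {0})) \<and> (\<Sum>i<N. (x i)\<^sup>2) = 1}"
    by (auto simp: PiE_def Pi_def)
  finally show ?thesis .
qed

lemma posdef_lower:
  assumes "symmetric_posdef N V" "1 \<le> N"
  shows "\<exists>\<mu>>0. \<forall>x \<in> carrier_vec N. (\<Sum>i<N. \<Sum>j<N. x$i * V$$(i,j) * x$j) \<ge> \<mu> * (\<Sum>i<N. (x$i)\<^sup>2)"
proof -
  define S where "S = {x::nat\<Rightarrow>real. (\<forall>i. x i \<in> (if i < N then {-1..1} else {0})) \<and> (\<Sum>i<N. (x i)\<^sup>2) = 1}"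
  define f where "f = (\<lambda>y::nat\<Rightarrow>real. \<Sum>i<N. \<Sum>j<N. y i * V$$(i,j) * y j)"
  have cS: "compact S" unfolding S_def by (rule sphere_compact)
  have "(\<lambda>i. if i = 0 then 1 else 0::real) \<in> S"
    using assms(2) by (auto simp: S_def if_distrib[where f="\<lambda>x. x^2"] cong: if_cong)
  hence ne: "S \<noteq> {}" by auto
  have cf: "continuous_on S f" unfolding f_def
    by (intro continuous_intros continuous_on_subset[OF continuous_on_product_coordinates]) auto
  obtain y0 where y0: "y0 \<in> S" "\<And>y. y \<in> S \<Longrightarrow> f y0 \<le> f y"
    using continuous_attains_inf[OF cS ne cf] by blast
  have pd: "\<And>x. x \<in> carrier_vec N \<Longrightarrow> x \<noteq> 0\<^sub>v N \<Longrightarrow> (\<Sum>i<N. \<Sum>j<N. x $ i * V $$ (i,j) * x $ j) > 0"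
    using assms(1) unfolding symmetric_posdef_def by blast
  have fv: "f y = (\<Sum>i<N. \<Sum>j<N. vec N y $ i * V $$ (i,j) * vec N y $ j)" for y
    unfolding f_def by (intro sum.cong refl) auto
  have "vec N y0 \<noteq> 0\<^sub>v N"
  proof
    assume "vec N y0 = 0\<^sub>v N"
    hence "\<And>i. i < N \<Longrightarrow> y0 i = 0" by (metis index_vec index_zero_vec(1))
    with y0(1) show False by (auto simp: S_def)
  qed
  hence mupos: "f y0 > 0" unfolding fv by (intro pd) auto
  show ?thesis
  proof (intro exI[of _ "f y0"] conjI ballI mupos)
    fix x :: "real vec" assume x: "x \<in> carrier_vec N"
    define r where "r = sqrt (\<Sum>i<N. (x$i)\<^sup>2)"
    show "f y0 * (\<Sum>i<N. (x$i)\<^sup>2) \<le> (\<Sum>i<N. \<Sum>j<N. x$i * V$$(i,j) * x$j)"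
    proof (cases "r = 0")
      case True
      hence "\<And>i. i < N \<Longrightarrow> x$i = 0" unfolding r_def
        by (simp add: sum_nonneg_eq_0_iff)
      thus ?thesis by simp
    next
      case False
      have "r \<ge> 0" unfolding r_def by (auto intro: sum_nonneg)
      with False have r0: "r > 0" by simp
      have r2: "r^2 = (\<Sum>i<N. (x$i)\<^sup>2)" unfolding r_def by (simp add: sum_nonneg)
      define y where "y = (\<lambda>i. if i < N then x$i / r else 0)"
      have "-r \<le> x$i \<and> x$i \<le> r" if "i < N" for i
      proof -
        have "(x$i)^2 \<le> (\<Sum>i<N. (x$i)\<^sup>2)"
          using that by (intro member_le_sum) auto
        from real_sqrt_le_mono[OF this] have "\<bar>x$i\<bar> \<le> r" unfolding r_def by simp
        thus ?thesis by linarith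
      qed
      hence "y \<in> S" using r0 unfolding S_def y_def
        by (auto simp: divide_simps r2[symmetric] power_divide sum_divide_distrib[symmetric])
      hence "f y0 \<le> f y" by (rule y0(2))
      also have "f y = (\<Sum>i<N. \<Sum>j<N. x$i * V$$(i,j) * x$j) / r^2"
        unfolding f_def y_def by (simp add: sum_divide_distrib power2_eq_square)
      finally show ?thesis using r0 by (simp add: r2[symmetric] field_simps)
    qed
  qed
qed


definition Mexp :: "real mat \<Rightarrow> real \<Rightarrow> real mat" where
  "Mexp A t = mat (dim_row A) (dim_col A) (\<lambda>(i,j). \<Sum>k. t^k / fact k * (A ^\<^sub>m k) $$ (i,j))"

lemma mult_entry:
  assumes "A \<in> carrier_mat n n" "B \<in> carrier_mat n n" "i < n" "j < n"
  shows "(A * B) $$ (i,j) = (\<Sum>l<n. A $$ (i,l) * B $$ (l,j))"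
  using assms by (simp add: scalar_prod_def atLeast0LessThan)

lemma mult_vec_entry:
  assumes "A \<in> carrier_mat n n" "x \<in> carrier_vec n" "i < n"
  shows "(A *\<^sub>v x) $ i = (\<Sum>l<n. A $$ (i,l) * x $ l)"
  using assms by (simp add: scalar_prod_def atLeast0LessThan)

lemma pow_mat_add:
  assumes A: "A \<in> carrier_mat n n"
  shows "A ^\<^sub>m (p+q) = A ^\<^sub>m p * A ^\<^sub>m q"
proof (induction q)
  case 0 then show ?case using A by simp
next
  case (Suc q)
  have "A ^\<^sub>m (p + Suc q) = (A ^\<^sub>m p * A ^\<^sub>m q) * A" using Suc by simp
  also have "\<dots> = A ^\<^sub>m p * (A ^\<^sub>m q * A)"
    using A by (intro assoc_mult_mat) auto
  finally show ?case by simp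
qed

lemma pow_mat_Suc_left:
  assumes A: "A \<in> carrier_mat n n"
  shows "A ^\<^sub>m Suc k = A * A ^\<^sub>m k"
  using pow_mat_add[OF A, of 1 k] A by simp

lemma pow_bound_exists:
  fixes A :: "real mat"
  assumes A: "A \<in> carrier_mat n n"
  shows "\<exists>M\<ge>1. \<forall>k i j. i < n \<longrightarrow> j < n \<longrightarrow> \<bar>(A ^\<^sub>m k) $$ (i,j)\<bar> \<le> M ^ k"
proof -
  define M where "M = 1 + (\<Sum>j<n. \<Sum>l<n. \<bar>A $$ (l,j)\<bar>)"
  have "0 \<le> (\<Sum>j<n. \<Sum>l<n. \<bar>A $$ (l,j)\<bar>)" by (intro sum_nonneg) auto
  hence M1: "M \<ge> 1" unfolding M_def by simp
  have colb: "(\<Sum>l<n. \<bar>A $$ (l,j)\<bar>) \<le> M" if "j < n" for j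
  proof -
    have "(\<Sum>l<n. \<bar>A $$ (l,j)\<bar>) \<le> (\<Sum>j<n. \<Sum>l<n. \<bar>A $$ (l,j)\<bar>)"
      using that by (intro member_le_sum) (auto simp: sum_nonneg)
    thus ?thesis unfolding M_def by simp
  qed
  have "\<bar>(A ^\<^sub>m k) $$ (i,j)\<bar> \<le> M ^ k" if "i < n" "j < n" for k i j
    using that
  proof (induction k arbitrary: i j)
    case 0 then show ?case using A by simp
  next
    case (Suc k)
    have "(A ^\<^sub>m Suc k) $$ (i,j) = (\<Sum>l<n. (A ^\<^sub>m k) $$ (i,l) * A $$ (l,j))"
      using A Suc.prems by (simp only: pow_mat.simps) (rule mult_entry, auto)
    hence "\<bar>(A ^\<^sub>m Suc k) $$ (i,j)\<bar> \<le> (\<Sum>l<n. \<bar>(A ^\<^sub>m k) $$ (i,l)\<bar> * \<bar>A $$ (l,j)\<bar>)"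
      by (auto intro: order.trans[OF sum_abs] simp: abs_mult)
    also have "\<dots> \<le> (\<Sum>l<n. M ^ k * \<bar>A $$ (l,j)\<bar>)"
      using Suc by (intro sum_mono mult_right_mono) auto
    also have "\<dots> = M ^ k * (\<Sum>l<n. \<bar>A $$ (l,j)\<bar>)" by (simp add: sum_distrib_left)
    also have "\<dots> \<le> M ^ k * M" using colb[OF Suc.prems(2)] M1 by (intro mult_left_mono) auto
    finally show ?case by (simp add: mult.commute)
  qed
  thus ?thesis using M1 by blast
qed

lemma exp_term_abs_summable:
  fixes A :: "real mat"
  assumes A: "A \<in> carrier_mat n n" and ij: "i < n" "j < n"
  shows "summable (\<lambda>k. \<bar>t^k / fact k * (A ^\<^sub>m k) $$ (i,j)\<bar>)"
proof -
  obtain M where M: "M \<ge> 1" "\<And>k i j. i < n \<Longrightarrow> j < n \<Longrightarrow> \<bar>(A ^\<^sub>m k) $$ (i,j)\<bar> \<le> M ^ k"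
    using pow_bound_exists[OF A] by blast
  have "summable (\<lambda>k. inverse (fact k) * (\<bar>t\<bar> * M)^k)" by (rule summable_exp)
  moreover have "norm \<bar>t^k / fact k * (A ^\<^sub>m k) $$ (i,j)\<bar> \<le> inverse (fact k) * (\<bar>t\<bar> * M)^k" for k
  proof -
    have "\<bar>t^k / fact k * (A ^\<^sub>m k) $$ (i,j)\<bar> = \<bar>t\<bar>^k / fact k * \<bar>(A ^\<^sub>m k) $$ (i,j)\<bar>"
      by (simp add: abs_mult power_abs)
    also have "\<dots> \<le> \<bar>t\<bar>^k / fact k * M^k"
      using M(2)[OF ij] by (intro mult_left_mono) auto
    finally show ?thesis by (simp add: power_mult_distrib divide_inverse mult_ac)
  qed
  ultimately show ?thesis by (rule summable_comparison_test'[where N=0])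
qed

lemma exp_term_summable:
  fixes A :: "real mat"
  assumes A: "A \<in> carrier_mat n n" and ij: "i < n" "j < n"
  shows "summable (\<lambda>k. t^k / fact k * (A ^\<^sub>m k) $$ (i,j))"
  using summable_rabs_cancel[OF exp_term_abs_summable[OF assms]] .

lemma Mexp_dim[simp]: "dim_row (Mexp A t) = dim_row A" "dim_col (Mexp A t) = dim_col A"
  unfolding Mexp_def by auto

lemma Mexp_carrier[simp]: "A \<in> carrier_mat n n \<Longrightarrow> Mexp A t \<in> carrier_mat n n"
  unfolding Mexp_def by auto

lemma Mexp_entry: "A \<in> carrier_mat n n \<Longrightarrow> i < n \<Longrightarrow> j < n \<Longrightarrow>
   Mexp A t $$ (i,j) = (\<Sum>k. t^k / fact k * (A ^\<^sub>m k) $$ (i,j))"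
  unfolding Mexp_def by auto

lemma Mexp_vec:
  assumes A: "A \<in> carrier_mat n n" and x: "x \<in> carrier_vec n"
  shows "exp_mat_vec A t x = Mexp A t *\<^sub>v x"
proof (rule eq_vecI)
  show "dim_vec (exp_mat_vec A t x) = dim_vec (Mexp A t *\<^sub>v x)"
    using A x by (simp add: exp_mat_vec_def)
  fix i assume "i < dim_vec (Mexp A t *\<^sub>v x)"
  hence i: "i < n" using A by simp
  have "exp_mat_vec A t x $ i = (\<Sum>k. t ^ k / fact k * (A ^\<^sub>m k *\<^sub>v x) $ i)"
    using i x by (simp add: exp_mat_vec_def)
  also have "\<dots> = (\<Sum>k. \<Sum>l<n. t ^ k / fact k * (A ^\<^sub>m k) $$ (i,l) * x $ l)"
    by (simp only: mult_vec_entry[OF pow_carrier_mat[OF A] x i]) (simp add: sum_distrib_left mult.assoc)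
  also have "\<dots> = (\<Sum>l<n. \<Sum>k. t ^ k / fact k * (A ^\<^sub>m k) $$ (i,l) * x $ l)"
    by (rule suminf_sum) (intro summable_mult2 exp_term_summable[OF A i], auto)
  also have "\<dots> = (\<Sum>l<n. Mexp A t $$ (i,l) * x $ l)"
  proof (intro sum.cong refl)
    fix l assume "l \<in> {..<n}" hence l: "l < n" by simp
    show "(\<Sum>k. t ^ k / fact k * (A ^\<^sub>m k) $$ (i,l) * x $ l) = Mexp A t $$ (i,l) * x $ l"
      using suminf_mult2[OF exp_term_summable[OF A i l, of t], of "x$l"] Mexp_entry[OF A i l] by simp
  qed
  also have "\<dots> = (Mexp A t *\<^sub>v x) $ i"
    using mult_vec_entry[OF Mexp_carrier[OF A] x i, of t] by simp
  finally show "exp_mat_vec A t x $ i = (Mexp A t *\<^sub>v x) $ i" .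
qed
lemma exp_series_real_add:
  fixes s t :: real
  shows "(s+t)^k / fact k = (\<Sum>p\<le>k. s^p / fact p * (t^(k-p) / fact (k-p)))"
  using exp_series_add_commuting[of s t k] by (simp add: divide_inverse mult_ac)

lemma Mexp_add:
  fixes A :: "real mat"
  assumes A: "A \<in> carrier_mat n n"
  shows "Mexp A (s+t) = Mexp A s * Mexp A t"
proof (rule eq_matI)
  fix i j assume "i < dim_row (Mexp A s * Mexp A t)" "j < dim_col (Mexp A s * Mexp A t)"
  hence i: "i < n" and j: "j < n" using A by auto
  define a where "a l k = s^k / fact k * (A ^\<^sub>m k) $$ (i,l)" for l k
  define b where "b l k = t^k / fact k * (A ^\<^sub>m k) $$ (l,j)" for l k
  have na: "summable (\<lambda>k. norm (a l k))" if "l < n" for l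
    unfolding a_def real_norm_def using exp_term_abs_summable[OF A i that] .
  have nb: "summable (\<lambda>k. norm (b l k))" if "l < n" for l
    unfolding b_def real_norm_def using exp_term_abs_summable[OF A that j] .
  have "(Mexp A s * Mexp A t) $$ (i,j) = (\<Sum>l<n. Mexp A s $$ (i,l) * Mexp A t $$ (l,j))"
    using A i j by (intro mult_entry) auto
  also have "\<dots> = (\<Sum>l<n. (\<Sum>k. a l k) * (\<Sum>k. b l k))"
    using A i j by (intro sum.cong refl) (simp add: Mexp_entry a_def b_def)
  also have "\<dots> = (\<Sum>l<n. \<Sum>k. \<Sum>p\<le>k. a l p * b l (k-p))"
    by (intro sum.cong refl Cauchy_product na nb) auto
  also have "\<dots> = (\<Sum>k. \<Sum>l<n. \<Sum>p\<le>k. a l p * b l (k-p))"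
    by (rule suminf_sum[symmetric], rule sums_summable, rule Cauchy_product_sums) (use na nb in auto)
  also have "\<dots> = (\<Sum>k. (s+t)^k / fact k * (A ^\<^sub>m k) $$ (i,j))"
  proof (rule arg_cong[where f=suminf], rule ext)
    fix k
    have "(\<Sum>l<n. \<Sum>p\<le>k. a l p * b l (k-p))
        = (\<Sum>p\<le>k. s^p / fact p * (t^(k-p) / fact (k-p)) * (\<Sum>l<n. (A ^\<^sub>m p) $$ (i,l) * (A ^\<^sub>m (k-p)) $$ (l,j)))"
      unfolding a_def b_def by (subst sum.swap) (simp add: sum_distrib_left mult_ac)
    also have "\<dots> = (\<Sum>p\<le>k. s^p / fact p * (t^(k-p) / fact (k-p)) * (A ^\<^sub>m k) $$ (i,j))"
    proof (intro sum.cong refl)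
      fix p assume "p \<in> {..k}"
      hence "A ^\<^sub>m k = A ^\<^sub>m p * A ^\<^sub>m (k-p)" using pow_mat_add[OF A, of p "k-p"] by simp
      hence "(A ^\<^sub>m k) $$ (i,j) = (\<Sum>l<n. (A ^\<^sub>m p) $$ (i,l) * (A ^\<^sub>m (k-p)) $$ (l,j))"
        using A i j by (simp only:) (rule mult_entry, auto)
      thus "s^p / fact p * (t^(k-p) / fact (k-p)) * (\<Sum>l<n. (A ^\<^sub>m p) $$ (i,l) * (A ^\<^sub>m (k-p)) $$ (l,j))
          = s^p / fact p * (t^(k-p) / fact (k-p)) * (A ^\<^sub>m k) $$ (i,j)" by simp
    qed
    also have "\<dots> = (s+t)^k / fact k * (A ^\<^sub>m k) $$ (i,j)"
      by (simp add: exp_series_real_add sum_distrib_right)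
    finally show "(\<Sum>l<n. \<Sum>p\<le>k. a l p * b l (k-p)) = (s+t)^k / fact k * (A ^\<^sub>m k) $$ (i,j)" .
  qed
  also have "\<dots> = Mexp A (s+t) $$ (i,j)" using A i j by (simp add: Mexp_entry)
  finally show "Mexp A (s+t) $$ (i,j) = (Mexp A s * Mexp A t) $$ (i,j)" ..
next
  show "dim_row (Mexp A (s+t)) = dim_row (Mexp A s * Mexp A t)" by simp
  show "dim_col (Mexp A (s+t)) = dim_col (Mexp A s * Mexp A t)" by simp
qed
lemma Mexp_deriv_entry:
  fixes A :: "real mat"
  assumes A: "A \<in> carrier_mat n n" and i: "i < n" and j: "j < n"
  shows "((\<lambda>t. Mexp A t $$ (i,j)) has_real_derivative (A * Mexp A t) $$ (i,j)) (at t)"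
proof -
  define c where "c k = (A ^\<^sub>m k) $$ (i,j) / fact k" for k
  have fe: "(\<lambda>t. Mexp A t $$ (i,j)) = (\<lambda>t. \<Sum>k. c k * t^k)"
    using A i j by (auto simp: Mexp_entry c_def intro!: ext arg_cong[where f=suminf])
  have sm: "summable (\<lambda>k. c k * y^k)" for y
  proof -
    have "(\<lambda>k. c k * y^k) = (\<lambda>k. y^k / fact k * (A ^\<^sub>m k) $$ (i,j))"
      by (auto simp: c_def)
    thus ?thesis using exp_term_summable[OF A i j] by simp
  qed
  have "((\<lambda>t. \<Sum>k. c k * t^k) has_real_derivative (\<Sum>k. diffs c k * t^k)) (at t)"
    by (rule termdiffs_strong_converges_everywhere) (rule sm)
  moreover have "(\<Sum>k. diffs c k * t^k) = (A * Mexp A t) $$ (i,j)"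
  proof -
    have "(\<Sum>k. diffs c k * t^k) = (\<Sum>k. \<Sum>l<n. A $$ (i,l) * (t^k / fact k * (A ^\<^sub>m k) $$ (l,j)))"
    proof (rule arg_cong[where f=suminf], rule ext)
      fix k
      have "diffs c k = of_nat (Suc k) * (A ^\<^sub>m Suc k) $$ (i,j) / (of_nat (Suc k) * fact k)"
        by (simp only: diffs_def c_def fact_Suc times_divide_eq_right)
      also have "\<dots> = (A ^\<^sub>m Suc k) $$ (i,j) / fact k"
        by (rule mult_divide_mult_cancel_left) simp
      also have "(A ^\<^sub>m Suc k) $$ (i,j) = (\<Sum>l<n. A $$ (i,l) * (A ^\<^sub>m k) $$ (l,j))"
        using A i j by (simp only: pow_mat_Suc_left[OF A]) (rule mult_entry, auto)
      finally show "diffs c k * t^k = (\<Sum>l<n. A $$ (i,l) * (t^k / fact k * (A ^\<^sub>m k) $$ (l,j)))"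
        by (simp add: sum_distrib_left sum_divide_distrib sum_distrib_right mult_ac)
    qed
    also have "\<dots> = (\<Sum>l<n. \<Sum>k. A $$ (i,l) * (t^k / fact k * (A ^\<^sub>m k) $$ (l,j)))"
      by (rule suminf_sum, rule summable_mult, rule exp_term_summable[OF A _ j]) auto
    also have "\<dots> = (\<Sum>l<n. A $$ (i,l) * Mexp A t $$ (l,j))"
    proof (intro sum.cong refl)
      fix l assume "l \<in> {..<n}" hence l: "l < n" by simp
      show "(\<Sum>k. A $$ (i,l) * (t^k / fact k * (A ^\<^sub>m k) $$ (l,j))) = A $$ (i,l) * Mexp A t $$ (l,j)"
        using suminf_mult[OF exp_term_summable[OF A l j, of t], of "A $$ (i,l)"] Mexp_entry[OF A l j] by simp
    qed
    also have "\<dots> = (A * Mexp A t) $$ (i,j)"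
      using A i j by (intro mult_entry[symmetric]) auto
    finally show ?thesis .
  qed
  ultimately show ?thesis unfolding fe by simp
qed

lemma Mexp_vec_deriv:
  fixes A :: "real mat"
  assumes A: "A \<in> carrier_mat n n" and x: "x \<in> carrier_vec n" and i: "i < n"
  shows "((\<lambda>t. (Mexp A t *\<^sub>v x) $ i) has_real_derivative (A *\<^sub>v (Mexp A t *\<^sub>v x)) $ i) (at t)"
proof -
  have fe: "(\<lambda>t. (Mexp A t *\<^sub>v x) $ i) = (\<lambda>t. \<Sum>j<n. Mexp A t $$ (i,j) * x $ j)"
    using A x i by (intro ext mult_vec_entry) auto
  have "((\<lambda>t. \<Sum>j<n. Mexp A t $$ (i,j) * x $ j) has_real_derivative (\<Sum>j<n. (A * Mexp A t) $$ (i,j) * x $ j)) (at t)"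
    by (intro DERIV_sum DERIV_cmult_right Mexp_deriv_entry[OF A i]) auto
  moreover have "(\<Sum>j<n. (A * Mexp A t) $$ (i,j) * x $ j) = (A *\<^sub>v (Mexp A t *\<^sub>v x)) $ i"
  proof -
    have "A *\<^sub>v (Mexp A t *\<^sub>v x) = (A * Mexp A t) *\<^sub>v x"
      using A x by (intro assoc_mult_mat_vec[symmetric]) auto
    thus ?thesis using mult_vec_entry[of "A * Mexp A t" n x i] A x i by simp
  qed
  ultimately show ?thesis unfolding fe by simp
qed




lemma sum_split2:
  fixes f :: "nat \<Rightarrow> 'a::comm_monoid_add"
  shows "(\<Sum>j<2*N. f j) = (\<Sum>j<N. f j) + (\<Sum>j<N. f (N+j))"
proof -
  have "(\<Sum>j<2*N. f j) = (\<Sum>j<N. f j) + (\<Sum>j\<in>{N..<2*N}. f j)"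
    by (simp add: lessThan_atLeast0 sum.atLeastLessThan_concat)
  also have "(\<Sum>j\<in>{N..<2*N}. f j) = (\<Sum>j<N. f (N+j))"
    using sum.shift_bounds_nat_ivl[of f 0 N N] by (simp add: lessThan_atLeast0 mult_2 add.commute)
  finally show ?thesis .
qed

lemma ifz_simps:
  "(if P then a else 0) * (y::real) = (if P then a * y else 0)"
  "(y::real) * (if P then a else 0) = (if P then y * a else 0)"
  "- (if P then a else 0) = (if P then -a else (0::real))"
  by auto

lemma sys_carrier: "V \<in> carrier_mat N N \<Longrightarrow> sys_mat N m \<alpha> V \<in> carrier_mat (2*N) (2*N)"
  unfolding sys_mat_def damp_mat_def by (auto simp: mult_2)

lemma sys_entry:
  assumes V: "V \<in> carrier_mat N N" and i: "i < 2*N" and j: "j < 2*N"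
  shows "sys_mat N m \<alpha> V $$ (i,j) =
    (if i < N then (if j < N then 0 else (if j - N = i then 1 else 0))
     else if j < N then - V $$ (i-N, j)
     else - (\<alpha> * (if i - N = j - N \<and> N - m \<le> i - N then 1 else 0)))"
  using V i j unfolding sys_mat_def damp_mat_def by (simp add: mult_2)

lemma sys_mult_top:
  assumes V: "V \<in> carrier_mat N N" and x: "x \<in> carrier_vec (2*N)" and i: "i < N"
  shows "(sys_mat N m \<alpha> V *\<^sub>v x) $ i = x $ (N+i)"
proof -
  have "(sys_mat N m \<alpha> V *\<^sub>v x) $ i = (\<Sum>l<2*N. sys_mat N m \<alpha> V $$ (i,l) * x $ l)"
    using sys_carrier[OF V] x i by (intro mult_vec_entry) auto
  also have "\<dots> = (\<Sum>l<N. if l = i then x $ (N+l) else 0)"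
    using i V by (simp add: sum_split2 sys_entry ifz_simps)
  also have "\<dots> = x $ (N+i)" using i by simp
  finally show ?thesis .
qed

lemma sys_mult_bot:
  assumes V: "V \<in> carrier_mat N N" and x: "x \<in> carrier_vec (2*N)" and i: "i < N"
  shows "(sys_mat N m \<alpha> V *\<^sub>v x) $ (N+i) =
     - (\<Sum>j<N. V $$ (i,j) * x $ j) - \<alpha> * (if N - m \<le> i then 1 else 0) * x $ (N+i)"
proof -
  have "(sys_mat N m \<alpha> V *\<^sub>v x) $ (N+i) = (\<Sum>l<2*N. sys_mat N m \<alpha> V $$ (N+i,l) * x $ l)"
    using sys_carrier[OF V] x i by (intro mult_vec_entry) auto
  also have "\<dots> = (\<Sum>l<N. - V $$ (i,l) * x $ l) + (\<Sum>l<N. if l = i then - (\<alpha> * (if N - m \<le> i then 1 else 0)) * x $ (N+l) else 0)"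
    using i V by (simp add: sum_split2 sys_entry ifz_simps)
  also have "\<dots> = - (\<Sum>j<N. V $$ (i,j) * x $ j) - \<alpha> * (if N - m \<le> i then 1 else 0) * x $ (N+i)"
    using i by (simp add: sum_negf)
  finally show ?thesis .
qed

lemma energy_deriv:
  assumes d: "\<And>i. i < 2*N \<Longrightarrow> ((\<lambda>t. y t $ i) has_real_derivative d i) (at t)"
  shows "((\<lambda>t. energy N V (y t)) has_real_derivative
     (\<Sum>i<N. y t $ (N+i) * d (N+i)) + (1/2) * (\<Sum>i<N. \<Sum>j<N. V $$ (j,i) * (d i * y t $ j + y t $ i * d j))) (at t)"
proof -
  have d1: "((\<lambda>t. y t $ i) has_real_derivative d i) (at t)" if "i < N" for i
    using d that by auto
  have d2: "((\<lambda>t. y t $ (N+i)) has_real_derivative d (N+i)) (at t)" if "i < N" for i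
    using d that by auto
  have sq: "((\<lambda>t. (y t $ (N+i))\<^sup>2) has_real_derivative 2 * (y t $ (N+i) * d (N+i))) (at t)" if "i < N" for i
    using DERIV_mult[OF d2[OF that] d2[OF that]] by (simp add: power2_eq_square mult.commute)
  have vq: "((\<lambda>t. V$$(j,i) * y t $ i * y t $ j) has_real_derivative V$$(j,i) * (d i * y t $ j + y t $ i * d j)) (at t)"
    if "i < N" "j < N" for i j
    using DERIV_mult[OF DERIV_cmult[OF d1[OF that(1)], of "V$$(j,i)"] d1[OF that(2)]]
    by (simp add: algebra_simps)
  have "((\<lambda>t. (1/2) * (\<Sum>i<N. (y t $ (N+i))\<^sup>2) + (1/2) * (\<Sum>i<N. \<Sum>j<N. V $$ (j,i) * y t $ i * y t $ j))
     has_real_derivative (1/2) * (\<Sum>i<N. 2 * (y t $ (N+i) * d (N+i))) + (1/2) * (\<Sum>i<N. \<Sum>j<N. V $$ (j,i) * (d i * y t $ j + y t $ i * d j))) (at t)"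
    by (intro DERIV_add DERIV_cmult DERIV_sum sq vq) auto
  thus ?thesis unfolding energy_def by (simp add: sum_distrib_left[symmetric])
qed



lemma energy_deriv_sys:
  fixes N m :: nat and \<alpha> :: real
  assumes V: "V \<in> carrier_mat N N" and sym: "transpose_mat V = V" and y: "y \<in> carrier_vec (2*N)"
  defines "d \<equiv> \<lambda>i. (sys_mat N m \<alpha> V *\<^sub>v y) $ i"
  shows "(\<Sum>i<N. y $ (N+i) * d (N+i)) + (1/2) * (\<Sum>i<N. \<Sum>j<N. V $$ (j,i) * (d i * y $ j + y $ i * d j))
       = - \<alpha> * (\<Sum>i<N. (if N - m \<le> i then 1 else 0) * (y $ (N+i))\<^sup>2)"
proof -
  have s: "V $$ (j,i) = V $$ (i,j)" if "i < N" "j < N" for i j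
    using V that by (metis carrier_matD index_transpose_mat(1) sym)
  have dt: "d i = y $ (N+i)" if "i < N" for i
    unfolding d_def using sys_mult_top[OF V y that] .
  have db: "d (N+i) = - (\<Sum>j<N. V $$ (i,j) * y $ j) - \<alpha> * (if N - m \<le> i then 1 else 0) * y $ (N+i)" if "i < N" for i
    unfolding d_def using sys_mult_bot[OF V y that] .
  define W where "W = (\<Sum>i<N. \<Sum>j<N. V $$ (i,j) * y $ (N+i) * y $ j)"
  have "(\<Sum>i<N. \<Sum>j<N. V $$ (j,i) * (d i * y $ j + y $ i * d j))
      = (\<Sum>i<N. \<Sum>j<N. V $$ (j,i) * d i * y $ j) + (\<Sum>i<N. \<Sum>j<N. V $$ (j,i) * y $ i * d j)"
    by (simp add: sum.distrib[symmetric] algebra_simps)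
  also have "(\<Sum>i<N. \<Sum>j<N. V $$ (j,i) * d i * y $ j) = W"
    unfolding W_def by (intro sum.cong refl) (simp add: s dt)
  also have "(\<Sum>i<N. \<Sum>j<N. V $$ (j,i) * y $ i * d j) = (\<Sum>j<N. \<Sum>i<N. V $$ (j,i) * y $ i * d j)"
    by (rule sum.swap)
  also have "\<dots> = W"
    unfolding W_def by (intro sum.cong refl) (simp add: dt mult_ac)
  finally have T2: "(\<Sum>i<N. \<Sum>j<N. V $$ (j,i) * (d i * y $ j + y $ i * d j)) = 2 * W" by simp
  have "(\<Sum>i<N. y $ (N+i) * d (N+i))
     = (\<Sum>i<N. - (\<Sum>j<N. V $$ (i,j) * y $ (N+i) * y $ j) - \<alpha> * ((if N - m \<le> i then 1 else 0) * (y $ (N+i))\<^sup>2))"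
  proof (intro sum.cong refl)
    fix i assume "i \<in> {..<N}"
    hence i: "i < N" by simp
    show "y $ (N+i) * d (N+i) = - (\<Sum>j<N. V $$ (i,j) * y $ (N+i) * y $ j) - \<alpha> * ((if N - m \<le> i then 1 else 0) * (y $ (N+i))\<^sup>2)"
      unfolding db[OF i] by (simp add: algebra_simps power2_eq_square sum_distrib_left)
  qed
  also have "\<dots> = - W - \<alpha> * (\<Sum>i<N. (if N - m \<le> i then 1 else 0) * (y $ (N+i))\<^sup>2)"
    unfolding W_def by (simp add: sum_subtractf sum_negf sum_distrib_left)
  finally show ?thesis using T2 by simp
qed

lemma energy_mono:
  assumes V: "V \<in> carrier_mat N N" and sym: "transpose_mat V = V" and a: "\<alpha> \<ge> 0"
    and psi: "\<psi> \<in> carrier_vec (2*N)" and st: "s \<le> t"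
  shows "energy N V (Mexp (sys_mat N m \<alpha> V) t *\<^sub>v \<psi>) \<le> energy N V (Mexp (sys_mat N m \<alpha> V) s *\<^sub>v \<psi>)"
proof (rule DERIV_nonpos_imp_nonincreasing[OF st])
  fix x :: real
  let ?A = "sys_mat N m \<alpha> V"
  have A: "?A \<in> carrier_mat (2*N) (2*N)" by (rule sys_carrier[OF V])
  define y where "y = Mexp ?A x *\<^sub>v \<psi>"
  have y: "y \<in> carrier_vec (2*N)" unfolding y_def by (rule mult_mat_vec_carrier[OF Mexp_carrier[OF A] psi])
  have "((\<lambda>t. energy N V (Mexp ?A t *\<^sub>v \<psi>)) has_real_derivative
     (\<Sum>i<N. y $ (N+i) * (?A *\<^sub>v y) $ (N+i)) + (1/2) * (\<Sum>i<N. \<Sum>j<N. V $$ (j,i) * ((?A *\<^sub>v y) $ i * y $ j + y $ i * (?A *\<^sub>v y) $ j))) (at x)"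
    unfolding y_def by (rule energy_deriv, rule Mexp_vec_deriv[OF A psi])
  moreover have "- \<alpha> * (\<Sum>i<N. (if N - m \<le> i then 1 else 0) * (y $ (N+i))\<^sup>2) \<le> 0"
    using a by (intro mult_nonpos_nonneg sum_nonneg) auto
  ultimately show "\<exists>D. ((\<lambda>t. energy N V (Mexp ?A t *\<^sub>v \<psi>)) has_real_derivative D) (at x) \<and> D \<le> 0"
    using energy_deriv_sys[OF V sym y] by auto
qed


lemma swap3: "(\<Sum>i\<in>A. \<Sum>k\<in>B. \<Sum>l\<in>C. f i k l) = (\<Sum>k\<in>B. \<Sum>l\<in>C. \<Sum>i\<in>A. (f i k l :: real))"
  by (subst sum.swap) (simp add: sum.swap[of _ A])

lemma quad_comp:
  assumes E: "E \<in> carrier_mat (2*N) (2*N)" and psi: "\<psi> \<in> carrier_vec (2*N)"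
  shows "energy N V (E *\<^sub>v \<psi>) = (\<Sum>k<2*N. \<Sum>l<2*N. \<psi> $ k * \<psi> $ l *
     ((1/2) * (\<Sum>i<N. E $$ (N+i,k) * E $$ (N+i,l)) + (1/2) * (\<Sum>i<N. \<Sum>j<N. V $$ (j,i) * E $$ (i,k) * E $$ (j,l))))"
proof -
  have ent: "(E *\<^sub>v \<psi>) $ a = (\<Sum>k<2*N. E $$ (a,k) * \<psi> $ k)" if "a < 2*N" for a
    using E psi that by (rule mult_vec_entry)
  have p1: "(\<Sum>i<N. ((E *\<^sub>v \<psi>) $ (N+i))\<^sup>2) = (\<Sum>i<N. \<Sum>k<2*N. \<Sum>l<2*N. \<psi> $ k * \<psi> $ l * (E $$ (N+i,k) * E $$ (N+i,l)))"
  proof (intro sum.cong refl)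
    fix i assume "i \<in> {..<N}"
    hence "N + i < 2*N" by simp
    thus "((E *\<^sub>v \<psi>) $ (N+i))\<^sup>2 = (\<Sum>k<2*N. \<Sum>l<2*N. \<psi> $ k * \<psi> $ l * (E $$ (N+i,k) * E $$ (N+i,l)))"
      by (simp add: ent power2_eq_square sum_product mult_ac)
  qed
  have p2: "(\<Sum>i<N. \<Sum>j<N. V $$ (j,i) * (E *\<^sub>v \<psi>) $ i * (E *\<^sub>v \<psi>) $ j)
      = (\<Sum>i<N. \<Sum>j<N. \<Sum>k<2*N. \<Sum>l<2*N. \<psi> $ k * \<psi> $ l * (V $$ (j,i) * E $$ (i,k) * E $$ (j,l)))"
  proof (intro sum.cong refl)
    fix i j assume "i \<in> {..<N}" "j \<in> {..<N}"
    hence "i < 2*N" "j < 2*N" by auto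
    thus "V $$ (j,i) * (E *\<^sub>v \<psi>) $ i * (E *\<^sub>v \<psi>) $ j = (\<Sum>k<2*N. \<Sum>l<2*N. \<psi> $ k * \<psi> $ l * (V $$ (j,i) * E $$ (i,k) * E $$ (j,l)))"
      by (simp add: ent sum_product sum_distrib_left mult_ac)
  qed
  have p2': "(\<Sum>i<N. \<Sum>j<N. \<Sum>k<2*N. \<Sum>l<2*N. \<psi> $ k * \<psi> $ l * (V $$ (j,i) * E $$ (i,k) * E $$ (j,l)))
     = (\<Sum>k<2*N. \<Sum>l<2*N. \<psi> $ k * \<psi> $ l * (\<Sum>i<N. \<Sum>j<N. V $$ (j,i) * E $$ (i,k) * E $$ (j,l)))"
  proof -
    have "(\<Sum>i<N. \<Sum>j<N. \<Sum>k<2*N. \<Sum>l<2*N. \<psi> $ k * \<psi> $ l * (V $$ (j,i) * E $$ (i,k) * E $$ (j,l)))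
       = (\<Sum>i<N. \<Sum>k<2*N. \<Sum>l<2*N. \<Sum>j<N. \<psi> $ k * \<psi> $ l * (V $$ (j,i) * E $$ (i,k) * E $$ (j,l)))"
      by (intro sum.cong refl swap3)
    also have "\<dots> = (\<Sum>k<2*N. \<Sum>l<2*N. \<Sum>i<N. \<Sum>j<N. \<psi> $ k * \<psi> $ l * (V $$ (j,i) * E $$ (i,k) * E $$ (j,l)))"
      by (rule swap3)
    finally show ?thesis by (simp add: sum_distrib_left)
  qed
  have p1': "(\<Sum>i<N. \<Sum>k<2*N. \<Sum>l<2*N. \<psi> $ k * \<psi> $ l * (E $$ (N+i,k) * E $$ (N+i,l)))
     = (\<Sum>k<2*N. \<Sum>l<2*N. \<psi> $ k * \<psi> $ l * (\<Sum>i<N. E $$ (N+i,k) * E $$ (N+i,l)))"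
    by (subst swap3) (simp add: sum_distrib_left)
  show ?thesis
    unfolding energy_def p1 p2 p2' p1'
    by (simp add: sum_distrib_left sum.distrib[symmetric] algebra_simps)
qed

lemma quad_polar:
  fixes K :: "nat \<Rightarrow> nat \<Rightarrow> real" and n :: nat
  defines "q \<equiv> \<lambda>\<psi>. (\<Sum>k<n. \<Sum>l<n. \<psi> $ k * \<psi> $ l * K k l)"
  assumes k: "k < n" and l: "l < n"
  shows "q (unit_vec n k + unit_vec n l) - q (unit_vec n k) - q (unit_vec n l) = K k l + K l k"
proof -
  have d: "(\<Sum>a<n. \<Sum>b<n. (if a = i then 1 else 0) * (if b = j then 1 else 0) * K a b) = K i j"
    if "i < n" "j < n" for i j
    using that by (simp add: ifz_simps)
  have u: "(unit_vec n k + unit_vec n l) $ a = (if a = k then 1 else 0) + (if a = l then 1 else 0)" if "a < n" for a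
    using that k l by simp
  have "q (unit_vec n k + unit_vec n l) = (\<Sum>a<n. \<Sum>b<n. ((if a = k then 1 else 0) + (if a = l then 1 else 0)) * ((if b = k then 1 else 0) + (if b = l then 1 else 0)) * K a b)"
    unfolding q_def
  proof (intro sum.cong refl)
    fix a b assume ab: "a \<in> {..<n}" "b \<in> {..<n}"
    show "(unit_vec n k + unit_vec n l) $ a * (unit_vec n k + unit_vec n l) $ b * K a b =
      ((if a = k then 1 else 0) + (if a = l then 1 else 0)) * ((if b = k then 1 else 0) + (if b = l then 1 else 0)) * K a b"
      using ab by (simp only: lessThan_iff u[of a] u[of b])
  qed
  also have "\<dots> = K k k + K k l + K l k + K l l" using k l
    by (simp add: ring_distribs sum.distrib ifz_simps)
  finally have 1: "q (unit_vec n k + unit_vec n l) = K k k + K k l + K l k + K l l" .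
  have 2: "q (unit_vec n i) = K i i" if "i < n" for i
    unfolding q_def using d[OF that that] that by (simp)
  show ?thesis using 1 2[OF k] 2[OF l] by simp
qed

lemma quad_sym:
  fixes K :: "nat \<Rightarrow> nat \<Rightarrow> real"
  shows "(\<Sum>k<n. \<Sum>l<n. \<psi> $ k * \<psi> $ l * K k l) = (1/2) * (\<Sum>k<n. \<Sum>l<n. \<psi> $ k * \<psi> $ l * (K k l + K l k))"
proof -
  have "(\<Sum>k<n. \<Sum>l<n. \<psi> $ k * \<psi> $ l * K l k) = (\<Sum>k<n. \<Sum>l<n. \<psi> $ k * \<psi> $ l * K k l)"
    by (subst sum.swap) (simp add: mult_ac)
  thus ?thesis by (simp add: distrib_left sum.distrib)
qed
lemma abs_prod_le: "\<bar>a * b\<bar> \<le> ((a::real)\<^sup>2 + b\<^sup>2) / 2"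
proof -
  have "2*(a*b) \<le> a\<^sup>2 + b\<^sup>2" "2*((-a)*b) \<le> (-a)\<^sup>2 + b\<^sup>2" using sum_squares_bound[of a b] sum_squares_bound[of "-a" b] by (simp_all add: mult.assoc)
  thus ?thesis by (simp add: abs_if)
qed

lemma uniform_contract:
  fixes Q :: "real \<Rightarrow> real vec \<Rightarrow> real" and K :: "real \<Rightarrow> nat \<Rightarrow> nat \<Rightarrow> real" and n :: nat
  assumes quad: "\<And>t \<psi>. \<psi> \<in> carrier_vec n \<Longrightarrow> Q t \<psi> = (\<Sum>k<n. \<Sum>l<n. \<psi>$k * \<psi>$l * K t k l)"
    and conv: "\<And>\<psi>. \<psi> \<in> carrier_vec n \<Longrightarrow> \<exists>L. ((\<lambda>t. Q t \<psi>) \<longlongrightarrow> L) at_top"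
    and eps: "\<epsilon> > 0" and n: "n > 0"
  shows "\<exists>T. \<forall>t\<ge>T. \<forall>\<psi>\<in>carrier_vec n. ((\<lambda>t. Q t \<psi>) \<longlongrightarrow> 0) at_top \<longrightarrow> Q t \<psi> \<le> \<epsilon> * (\<Sum>k<n. (\<psi>$k)\<^sup>2)"
proof -
  define S where "S t k l = K t k l + K t l k" for t k l
  define e where "e k = (unit_vec n k :: real vec)" for k
  have Sq: "S t k l = Q t (e k + e l) - Q t (e k) - Q t (e l)" if "k < n" "l < n" for t k l
    unfolding S_def e_def using quad_polar[of k n l "K t", OF that] that
    by (simp add: quad[of "unit_vec n k + unit_vec n l"] quad[of "unit_vec n k"] quad[of "unit_vec n l"])
  have Sconv: "\<exists>L. ((\<lambda>t. S t k l) \<longlongrightarrow> L) at_top" if "k < n" "l < n" for k l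
  proof -
    obtain L1 where L1: "((\<lambda>t. Q t (e k + e l)) \<longlongrightarrow> L1) at_top" using conv[of "e k + e l"] by (auto simp: e_def)
    obtain L2 where L2: "((\<lambda>t. Q t (e k)) \<longlongrightarrow> L2) at_top" using conv[of "e k"] by (auto simp: e_def)
    obtain L3 where L3: "((\<lambda>t. Q t (e l)) \<longlongrightarrow> L3) at_top" using conv[of "e l"] by (auto simp: e_def)
    have "((\<lambda>t. Q t (e k + e l) - Q t (e k) - Q t (e l)) \<longlongrightarrow> L1 - L2 - L3) at_top"
      by (intro tendsto_diff L1 L2 L3)
    thus ?thesis using Sq[OF that] by auto
  qed
  define Si where "Si k l = Lim at_top (\<lambda>t. S t k l)" for k l
  have Si: "((\<lambda>t. S t k l) \<longlongrightarrow> Si k l) at_top" if "k < n" "l < n" for k l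
    using Sconv[OF that] unfolding Si_def by (metis tendsto_Lim trivial_limit_at_top_linorder)
  define \<epsilon>' where "\<epsilon>' = \<epsilon> / n"
  have e'pos: "\<epsilon>' > 0" unfolding \<epsilon>'_def using eps n by simp
  have "eventually (\<lambda>t. \<forall>p\<in>{..<n}\<times>{..<n}. \<bar>S t (fst p) (snd p) - Si (fst p) (snd p)\<bar> < \<epsilon>') at_top"
  proof (rule eventually_ball_finite)
    show "\<forall>p\<in>{..<n}\<times>{..<n}. eventually (\<lambda>t. \<bar>S t (fst p) (snd p) - Si (fst p) (snd p)\<bar> < \<epsilon>') at_top"
    proof
      fix p assume "p \<in> {..<n}\<times>{..<n}"
      hence "fst p < n" "snd p < n" by auto
      from Si[OF this] e'pos show "eventually (\<lambda>t. \<bar>S t (fst p) (snd p) - Si (fst p) (snd p)\<bar> < \<epsilon>') at_top"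
        unfolding tendsto_iff dist_real_def by blast
    qed
  qed auto
  then obtain T where T: "\<And>t k l. t \<ge> T \<Longrightarrow> k < n \<Longrightarrow> l < n \<Longrightarrow> \<bar>S t k l - Si k l\<bar> < \<epsilon>'"
    unfolding eventually_at_top_linorder by force
  have Qs: "Q t \<psi> = (1/2) * (\<Sum>k<n. \<Sum>l<n. \<psi>$k * \<psi>$l * S t k l)" if "\<psi> \<in> carrier_vec n" for t \<psi>
    unfolding quad[OF that] S_def by (rule quad_sym)
  show ?thesis
  proof (intro exI[of _ T] allI impI ballI)
    fix t \<psi> assume t: "t \<ge> T" and psi: "\<psi> \<in> carrier_vec n" and lim0: "((\<lambda>t. Q t \<psi>) \<longlongrightarrow> 0) at_top"
    have "((\<lambda>t. Q t \<psi>) \<longlongrightarrow> (1/2) * (\<Sum>k<n. \<Sum>l<n. \<psi>$k * \<psi>$l * Si k l)) at_top"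
      unfolding Qs[OF psi] by (intro tendsto_intros Si) auto
    hence z: "(1/2) * (\<Sum>k<n. \<Sum>l<n. \<psi>$k * \<psi>$l * Si k l) = 0"
      using lim0 tendsto_unique trivial_limit_at_top_linorder by blast
    have "Q t \<psi> = (1/2) * (\<Sum>k<n. \<Sum>l<n. \<psi>$k * \<psi>$l * (S t k l - Si k l))"
      using z unfolding Qs[OF psi] by (simp add: algebra_simps sum_subtractf)
    also have "\<dots> \<le> (1/2) * (\<Sum>k<n. \<Sum>l<n. ((\<psi>$k)\<^sup>2 + (\<psi>$l)\<^sup>2) / 2 * \<epsilon>')"
    proof (intro mult_left_mono sum_mono)
      fix k l assume "k \<in> {..<n}" "l \<in> {..<n}"
      hence b: "\<bar>S t k l - Si k l\<bar> \<le> \<epsilon>'" using T[OF t] by (auto intro: less_imp_le)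
      have "\<psi>$k * \<psi>$l * (S t k l - Si k l) \<le> \<bar>\<psi>$k * \<psi>$l\<bar> * \<bar>S t k l - Si k l\<bar>"
        by (metis abs_ge_self abs_mult)
      also have "\<dots> \<le> ((\<psi>$k)\<^sup>2 + (\<psi>$l)\<^sup>2) / 2 * \<epsilon>'"
        by (intro mult_mono abs_prod_le b) auto
      finally show "\<psi>$k * \<psi>$l * (S t k l - Si k l) \<le> ((\<psi>$k)\<^sup>2 + (\<psi>$l)\<^sup>2) / 2 * \<epsilon>'" .
    qed auto
    also have "(\<Sum>k<n. \<Sum>l<n. ((\<psi>$k)\<^sup>2 + (\<psi>$l)\<^sup>2) / 2 * \<epsilon>') = real n * (\<Sum>k<n. (\<psi>$k)\<^sup>2) * \<epsilon>'"
    proof -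
      define P where "P = (\<Sum>k<n. (\<psi>$k)\<^sup>2)"
      have "(\<Sum>k<n. \<Sum>l<n. ((\<psi>$k)\<^sup>2 + (\<psi>$l)\<^sup>2) / 2 * \<epsilon>') = (\<Sum>k<n. real n * (\<psi>$k)\<^sup>2 * (\<epsilon>'/2) + P * (\<epsilon>'/2))"
        unfolding P_def by (intro sum.cong refl) (simp add: sum.distrib sum_distrib_right[symmetric] add_divide_distrib algebra_simps sum_divide_distrib[symmetric] sum_distrib_left[symmetric])
      also have "\<dots> = (\<Sum>k<n. real n * (\<psi>$k)\<^sup>2 * (\<epsilon>'/2)) + real n * (P * (\<epsilon>'/2))"
        by (simp add: sum.distrib)
      also have "(\<Sum>k<n. real n * (\<psi>$k)\<^sup>2 * (\<epsilon>'/2)) = real n * P * (\<epsilon>'/2)"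
        unfolding P_def by (simp add: sum_distrib_left sum_distrib_right)
      also have "real n * P * (\<epsilon>'/2) + real n * (P * (\<epsilon>'/2)) = real n * P * \<epsilon>'" by simp
      finally show ?thesis unfolding P_def .
    qed
    also have "(1/2) * (real n * (\<Sum>k<n. (\<psi>$k)\<^sup>2) * \<epsilon>') \<le> \<epsilon> * (\<Sum>k<n. (\<psi>$k)\<^sup>2)"
      unfolding \<epsilon>'_def using n eps by (simp add: sum_nonneg)
    finally show "Q t \<psi> \<le> \<epsilon> * (\<Sum>k<n. (\<psi>$k)\<^sup>2)" .
  qed
qed



lemma Mexp_zero:
  fixes A :: "real mat"
  assumes A: "A \<in> carrier_mat n n"
  shows "Mexp A 0 = 1\<^sub>m n"
proof (rule eq_matI)
  fix i j assume "i < dim_row (1\<^sub>m n :: real mat)" "j < dim_col (1\<^sub>m n :: real mat)"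
  hence i: "i < n" and j: "j < n" by auto
  have "Mexp A 0 $$ (i,j) = (\<Sum>k. ((A ^\<^sub>m k) $$ (i,j) / fact k) * 0 ^ k)"
    using A i j by (simp add: Mexp_entry mult.commute)
  also have "\<dots> = (A ^\<^sub>m 0) $$ (i,j) / fact 0" by (rule powser_zero)
  also have "\<dots> = 1\<^sub>m n $$ (i,j)" using A i j by simp
  finally show "Mexp A 0 $$ (i,j) = 1\<^sub>m n $$ (i,j)" .
qed (use A in auto)

lemma energy_lower:
  assumes pd: "symmetric_posdef N V" and N1: "1 \<le> N"
  shows "\<exists>\<mu>>0. \<forall>\<psi>\<in>carrier_vec (2*N). energy N V \<psi> \<ge> \<mu> * (\<Sum>k<2*N. (\<psi>$k)\<^sup>2)"
proof -
  obtain \<mu> where mu: "\<mu> > 0" "\<And>x. x \<in> carrier_vec N \<Longrightarrow> (\<Sum>i<N. \<Sum>j<N. x$i * V$$(i,j) * x$j) \<ge> \<mu> * (\<Sum>i<N. (x$i)\<^sup>2)"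
    using posdef_lower[OF pd N1] by blast
  define \<mu>' where "\<mu>' = min (1/2) (\<mu>/2)"
  have mu': "\<mu>' > 0" unfolding \<mu>'_def using mu by simp
  show ?thesis
  proof (intro exI[of _ \<mu>'] conjI ballI mu')
    fix \<psi> :: "real vec" assume psi: "\<psi> \<in> carrier_vec (2*N)"
    define q where "q = vec N (\<lambda>i. \<psi>$i)"
    have q: "q \<in> carrier_vec N" unfolding q_def by simp
    have "(\<Sum>i<N. \<Sum>j<N. V $$ (j,i) * \<psi> $ i * \<psi> $ j) = (\<Sum>j<N. \<Sum>i<N. V $$ (j,i) * \<psi> $ i * \<psi> $ j)"
      by (rule sum.swap)
    also have "\<dots> = (\<Sum>i<N. \<Sum>j<N. q$i * V$$(i,j) * q$j)"
      unfolding q_def by (intro sum.cong refl) (simp add: mult_ac)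
    finally have vq: "(\<Sum>i<N. \<Sum>j<N. V $$ (j,i) * \<psi> $ i * \<psi> $ j) \<ge> \<mu> * (\<Sum>i<N. (\<psi>$i)\<^sup>2)"
      using mu(2)[OF q] unfolding q_def by simp
    have s1: "0 \<le> (\<Sum>i<N. (\<psi>$i)\<^sup>2)" "0 \<le> (\<Sum>i<N. (\<psi>$(N+i))\<^sup>2)" by (auto intro: sum_nonneg)
    have "\<mu>' * (\<Sum>k<2*N. (\<psi>$k)\<^sup>2) = \<mu>' * (\<Sum>i<N. (\<psi>$i)\<^sup>2) + \<mu>' * (\<Sum>i<N. (\<psi>$(N+i))\<^sup>2)"
      by (simp add: sum_split2 distrib_left)
    also have "\<dots> \<le> (\<mu>/2) * (\<Sum>i<N. (\<psi>$i)\<^sup>2) + (1/2) * (\<Sum>i<N. (\<psi>$(N+i))\<^sup>2)"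
      using s1 unfolding \<mu>'_def by (intro add_mono mult_right_mono) auto
    also have "\<dots> \<le> energy N V \<psi>" unfolding energy_def using vq by simp
    finally show "\<mu>' * (\<Sum>k<2*N. (\<psi>$k)\<^sup>2) \<le> energy N V \<psi>" .
  qed
qed

lemma energy_upper:
  "\<exists>C\<ge>0. \<forall>\<psi>\<in>carrier_vec (2*N). (\<Sum>k<2*N. (\<psi>$k)\<^sup>2) \<le> 1 \<longrightarrow> energy N V \<psi> \<le> C"
proof -
  define C where "C = 1/2 + (1/2) * (\<Sum>i<N. \<Sum>j<N. \<bar>V $$ (j,i)\<bar>)"
  have "0 \<le> (\<Sum>i<N. \<Sum>j<N. \<bar>V $$ (j,i)\<bar>)" by (intro sum_nonneg) auto
  hence C0: "C \<ge> 0" unfolding C_def by simp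
  show ?thesis
  proof (intro exI[of _ C] conjI ballI impI C0)
    fix \<psi> :: "real vec" assume psi: "\<psi> \<in> carrier_vec (2*N)" and s: "(\<Sum>k<2*N. (\<psi>$k)\<^sup>2) \<le> 1"
    have s1: "0 \<le> (\<Sum>i<N. (\<psi>$i)\<^sup>2)" by (auto intro: sum_nonneg)
    have p: "(\<Sum>i<N. (\<psi>$(N+i))\<^sup>2) \<le> 1" using s s1 by (simp add: sum_split2)
    have b: "\<bar>\<psi>$k\<bar> \<le> 1" if "k < 2*N" for k
    proof -
      have "(\<psi>$k)\<^sup>2 \<le> (\<Sum>k<2*N. (\<psi>$k)\<^sup>2)" using that by (intro member_le_sum) auto
      thus ?thesis using s abs_square_le_1 by (metis order.trans)
    qed
    have "(\<Sum>i<N. \<Sum>j<N. V $$ (j,i) * \<psi> $ i * \<psi> $ j) \<le> (\<Sum>i<N. \<Sum>j<N. \<bar>V $$ (j,i)\<bar>)"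
    proof (intro sum_mono)
      fix i j assume "i \<in> {..<N}" "j \<in> {..<N}"
      hence bi: "\<bar>\<psi>$i\<bar> \<le> 1" "\<bar>\<psi>$j\<bar> \<le> 1" using b by auto
      have "V $$ (j,i) * \<psi> $ i * \<psi> $ j \<le> \<bar>V $$ (j,i)\<bar> * (\<bar>\<psi> $ i\<bar> * \<bar>\<psi> $ j\<bar>)"
        by (metis abs_ge_self abs_mult mult.assoc)
      also have "\<dots> \<le> \<bar>V $$ (j,i)\<bar> * 1" using bi by (intro mult_left_mono) (auto intro: mult_le_one)
      finally show "V $$ (j,i) * \<psi> $ i * \<psi> $ j \<le> \<bar>V $$ (j,i)\<bar>" by simp
    qed
    thus "energy N V \<psi> \<le> C" unfolding energy_def C_def using p by simp
  qed
qed



lemma quarter_pow: "(1/4::real)^k = exp (- (real k * ln 4))"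
proof -
  have "exp (real k * ln 4) = (4::real)^k" by (simp add: exp_of_nat_mult)
  thus ?thesis by (simp add: exp_minus power_one_over inverse_eq_divide)
qed
lemma exp_ln4: "exp (ln 4 - x) = 4 * exp (- x :: real)"
  by (simp add: exp_diff exp_minus divide_inverse)

lemma part2:
  fixes N m :: nat and \<alpha> :: real and V :: "real mat"
  assumes N1: "1 \<le> N" and a: "\<alpha> \<ge> 0" and pd: "symmetric_posdef N V"
  shows "\<exists>C \<beta>. \<beta> > 0 \<and> (\<forall>t \<ge> 0.
         restr_exp_norm (sys_mat N m \<alpha> V) (L_minus N m \<alpha> V) t \<le> C * exp (- \<beta> * t))"
proof -
  define A where "A = sys_mat N m \<alpha> V"
  define n where "n = 2*N"
  have V: "V \<in> carrier_mat N N" and sym: "transpose_mat V = V"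
    using pd unfolding symmetric_posdef_def by auto
  have A: "A \<in> carrier_mat n n" unfolding A_def n_def by (rule sys_carrier[OF V])
  have n0: "n > 0" unfolding n_def using N1 by simp
  define Q where "Q t \<psi> = energy N V (Mexp A t *\<^sub>v \<psi>)" for t \<psi>
  obtain \<mu> where mu: "\<mu> > 0" "\<And>\<psi>. \<psi> \<in> carrier_vec n \<Longrightarrow> energy N V \<psi> \<ge> \<mu> * (\<Sum>k<n. (\<psi>$k)\<^sup>2)"
    using energy_lower[OF pd N1] unfolding n_def by blast
  obtain C1 where C1: "C1 \<ge> 0" "\<And>\<psi>. \<psi> \<in> carrier_vec n \<Longrightarrow> (\<Sum>k<n. (\<psi>$k)\<^sup>2) \<le> 1 \<Longrightarrow> energy N V \<psi> \<le> C1"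
    using energy_upper[of N V] unfolding n_def by blast
  have Mv: "Mexp A t *\<^sub>v \<psi> \<in> carrier_vec n" if "\<psi> \<in> carrier_vec n" for t \<psi>
    by (rule mult_mat_vec_carrier[OF Mexp_carrier[OF A] that])
  have enn: "energy N V \<psi> \<ge> 0" if "\<psi> \<in> carrier_vec n" for \<psi>
    using mu(2)[OF that] mu(1) by (smt (verit) sum_nonneg zero_le_power2 mult_nonneg_nonneg)
  have mono: "Q t \<psi> \<le> Q s \<psi>" if "s \<le> t" "\<psi> \<in> carrier_vec n" for s t \<psi>
    unfolding Q_def A_def using energy_mono[OF V sym a _ that(1)] that(2) unfolding n_def by blast
  have conv: "\<exists>L. ((\<lambda>t. Q t \<psi>) \<longlongrightarrow> L) at_top" if psi: "\<psi> \<in> carrier_vec n" for \<psi>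
  proof -
    define l where "l = Inf (range (\<lambda>t. Q t \<psi>))"
    have bdd: "bdd_below (range (\<lambda>t. Q t \<psi>))"
      using enn[OF Mv[OF psi]] unfolding Q_def by (intro bdd_belowI[of _ 0]) auto
    have "((\<lambda>t. Q t \<psi>) \<longlongrightarrow> l) at_top"
    proof (rule decreasing_tendsto)
      show "\<forall>\<^sub>F t in at_top. l \<le> Q t \<psi>"
        unfolding l_def using bdd by (auto intro!: always_eventually cInf_lower)
      fix x assume "l < x"
      then obtain t0 where "Q t0 \<psi> < x" using cInf_lessD[of "range (\<lambda>t. Q t \<psi>)" x] unfolding l_def by auto
      thus "\<forall>\<^sub>F t in at_top. Q t \<psi> < x"
        unfolding eventually_at_top_linorder using mono[OF _ psi] by (meson le_less_trans)
    qed
    thus ?thesis by blast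
  qed
  have quad: "Q t \<psi> = (\<Sum>k<n. \<Sum>l<n. \<psi>$k * \<psi>$l *
     ((1/2) * (\<Sum>i<N. Mexp A t $$ (N+i,k) * Mexp A t $$ (N+i,l)) + (1/2) * (\<Sum>i<N. \<Sum>j<N. V $$ (j,i) * Mexp A t $$ (i,k) * Mexp A t $$ (j,l))))"
    if "\<psi> \<in> carrier_vec n" for t \<psi>
    unfolding Q_def n_def by (rule quad_comp) (use A that in \<open>auto simp: n_def\<close>)
  obtain T where T: "\<And>t \<psi>. t \<ge> T \<Longrightarrow> \<psi> \<in> carrier_vec n \<Longrightarrow> ((\<lambda>t. Q t \<psi>) \<longlongrightarrow> 0) at_top \<Longrightarrow> Q t \<psi> \<le> (\<mu>/4) * (\<Sum>k<n. (\<psi>$k)\<^sup>2)"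
    using uniform_contract[of n Q, OF quad conv _ n0, of "\<mu>/4"] mu(1) by auto
  define T' where "T' = max T 1"
  have T'pos: "T' > 0" unfolding T'_def by simp
  have Lm: "\<psi> \<in> L_minus N m \<alpha> V \<longleftrightarrow> \<psi> \<in> carrier_vec n \<and> ((\<lambda>t. Q t \<psi>) \<longlongrightarrow> 0) at_top" for \<psi>
  proof -
    have "\<psi> \<in> carrier_vec n \<Longrightarrow> (\<lambda>t. energy N V (exp_mat_vec A t \<psi>)) = (\<lambda>t. Q t \<psi>)"
      unfolding Q_def using Mexp_vec[OF A] by auto
    thus ?thesis unfolding L_minus_def A_def[symmetric] n_def by auto
  qed
  have contr: "Q T' \<psi> \<le> (1/4) * energy N V \<psi>" if "\<psi> \<in> L_minus N m \<alpha> V" for \<psi>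
  proof -
    have psi: "\<psi> \<in> carrier_vec n" and l0: "((\<lambda>t. Q t \<psi>) \<longlongrightarrow> 0) at_top" using that Lm by auto
    have "Q T' \<psi> \<le> (\<mu>/4) * (\<Sum>k<n. (\<psi>$k)\<^sup>2)" using T[OF _ psi l0] unfolding T'_def by simp
    also have "\<dots> \<le> (1/4) * energy N V \<psi>" using mu(2)[OF psi] by simp
    finally show ?thesis .
  qed
  have semi: "Mexp A (u+s) *\<^sub>v \<psi> = Mexp A u *\<^sub>v (Mexp A s *\<^sub>v \<psi>)" if "\<psi> \<in> carrier_vec n" for u s \<psi>
    using Mexp_add[OF A, of u s] A that by (simp add: assoc_mult_mat_vec[of _ n n _ n])
  have inv: "Mexp A s *\<^sub>v \<psi> \<in> L_minus N m \<alpha> V" if "\<psi> \<in> L_minus N m \<alpha> V" for s \<psi>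
  proof -
    have psi: "\<psi> \<in> carrier_vec n" and l0: "((\<lambda>t. Q t \<psi>) \<longlongrightarrow> 0) at_top" using that Lm by auto
    have "filterlim (\<lambda>u. s + u) at_top at_top"
      by (rule filterlim_tendsto_add_at_top[OF tendsto_const filterlim_ident])
    hence "((\<lambda>u. Q (s + u) \<psi>) \<longlongrightarrow> 0) at_top" using filterlim_compose[OF l0] by blast
    moreover have "Q (s+u) \<psi> = Q u (Mexp A s *\<^sub>v \<psi>)" for u
      unfolding Q_def using semi[OF psi, of u s] by (simp add: add.commute)
    ultimately show ?thesis using Lm Mv[OF psi] by simp
  qed
  have iter: "Q (real k * T') \<psi> \<le> (1/4)^k * energy N V \<psi>" if "\<psi> \<in> L_minus N m \<alpha> V" for k \<psi>
  proof (induction k)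
    case 0
    have "\<psi> \<in> carrier_vec n" using that Lm by auto
    thus ?case unfolding Q_def using Mexp_zero[OF A] by simp
  next
    case (Suc k)
    have psi: "\<psi> \<in> carrier_vec n" using that Lm by auto
    have "Q (real (Suc k) * T') \<psi> = Q T' (Mexp A (real k * T') *\<^sub>v \<psi>)"
      unfolding Q_def using semi[OF psi, of T' "real k * T'"] by (simp add: algebra_simps)
    also have "\<dots> \<le> (1/4) * energy N V (Mexp A (real k * T') *\<^sub>v \<psi>)"
      by (rule contr[OF inv[OF that]])
    also have "\<dots> = (1/4) * Q (real k * T') \<psi>" unfolding Q_def ..
    also have "\<dots> \<le> (1/4) * ((1/4)^k * energy N V \<psi>)" using Suc by simp
    finally show ?case by simp
  qed
  have zeroL: "0\<^sub>v n \<in> L_minus N m \<alpha> V"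
  proof -
    have "Mexp A t *\<^sub>v 0\<^sub>v n = 0\<^sub>v n" for t
    proof (rule eq_vecI)
      fix i assume "i < dim_vec (0\<^sub>v n :: real vec)"
      hence i: "i < n" by simp
      show "(Mexp A t *\<^sub>v 0\<^sub>v n) $ i = 0\<^sub>v n $ i"
        using mult_vec_entry[OF Mexp_carrier[OF A] zero_carrier_vec i] i by simp
    qed (use A in simp)
    moreover have "energy N V (0\<^sub>v n) = 0" unfolding energy_def n_def by simp
    ultimately have "Q t (0\<^sub>v n) = 0" for t unfolding Q_def by simp
    thus ?thesis using Lm by simp
  qed
  define \<beta> where "\<beta> = ln 4 / (2*T')"
  define C where "C = sqrt (4*C1/\<mu>)"
  have bpos: "\<beta> > 0" unfolding \<beta>_def using T'pos by simp
  have bound: "eucl_norm (exp_mat_vec A t \<psi>) \<le> C * exp (-\<beta>*t)"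
    if t: "t \<ge> 0" and psiL: "\<psi> \<in> L_minus N m \<alpha> V" and nrm: "eucl_norm \<psi> \<le> 1" for t \<psi>
  proof -
    have psi: "\<psi> \<in> carrier_vec n" using psiL Lm by auto
    have s1: "(\<Sum>k<n. (\<psi>$k)\<^sup>2) \<le> 1" using nrm psi unfolding eucl_norm_def by simp
    define k where "k = nat \<lfloor>t / T'\<rfloor>"
    have tT: "t / T' \<ge> 0" using t T'pos by simp
    have rk: "real k = of_int \<lfloor>t / T'\<rfloor>" unfolding k_def using tT by simp
    have k1: "real k * T' \<le> t"
    proof -
      have "real k \<le> t / T'" unfolding rk by (rule of_int_floor_le)
      thus ?thesis using T'pos by (simp add: field_simps)
    qed
    have k2: "t / T' - 1 < real k" unfolding rk by (rule real_of_int_floor_gt_diff_one)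
    have "(1/4::real)^k = exp (- (real k * ln 4))" by (rule quarter_pow)
    also have "\<dots> \<le> exp (ln 4 - (2*\<beta>) * t)"
    proof -
      have "- (real k * ln 4) \<le> - ((t / T' - 1) * ln 4)"
        using k2 by (intro le_imp_neg_le mult_right_mono) auto
      also have "\<dots> = ln 4 - (2*\<beta>) * t"
      proof -
        have "\<And>L::real. - ((t / T' - 1) * L) = L - (2 * (L / (2*T'))) * t" using T'pos by (simp add: field_simps)
        thus ?thesis unfolding \<beta>_def by blast
      qed
      finally show ?thesis by simp
    qed
    also have "\<dots> = 4 * exp (-(2*\<beta>) * t)" using exp_ln4[of "(2*\<beta>) * t"] by simp
    finally have q4: "(1/4::real)^k \<le> 4 * exp (-(2*\<beta>) * t)" .
    define y where "y = Mexp A t *\<^sub>v \<psi>"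
    have y: "y \<in> carrier_vec n" unfolding y_def by (rule Mv[OF psi])
    have "\<mu> * (\<Sum>k<n. (y$k)\<^sup>2) \<le> Q t \<psi>" unfolding Q_def y_def[symmetric] by (rule mu(2)[OF y])
    also have "\<dots> \<le> Q (real k * T') \<psi>" by (rule mono[OF k1 psi])
    also have "\<dots> \<le> (1/4)^k * energy N V \<psi>" by (rule iter[OF psiL])
    also have "\<dots> \<le> (1/4)^k * C1" by (intro mult_left_mono C1(2)[OF psi s1]) auto
    also have "\<dots> \<le> 4 * exp (-(2*\<beta>) * t) * C1" by (intro mult_right_mono q4 C1(1))
    finally have ms: "\<mu> * (\<Sum>k<n. (y$k)\<^sup>2) \<le> 4 * exp (-(2*\<beta>) * t) * C1" .
    have e2: "exp (-(2*\<beta>) * t) = (exp (-\<beta> * t))\<^sup>2"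
      unfolding power2_eq_square exp_add[symmetric] by (rule arg_cong[where f=exp]) simp
    have "(\<Sum>k<n. (y$k)\<^sup>2) \<le> (4 * exp (-(2*\<beta>) * t) * C1) / \<mu>"
      using ms mu(1) by (simp add: pos_le_divide_eq mult.commute)
    hence "(\<Sum>k<n. (y$k)\<^sup>2) \<le> (4*C1/\<mu>) * (exp (-\<beta> * t))\<^sup>2"
      unfolding e2 by (simp add: mult_ac)
    hence "sqrt (\<Sum>k<n. (y$k)\<^sup>2) \<le> sqrt ((4*C1/\<mu>) * (exp (-\<beta> * t))\<^sup>2)"
      by (rule real_sqrt_le_mono)
    also have "\<dots> = C * exp (-\<beta> * t)" unfolding C_def real_sqrt_mult real_sqrt_abs by simp
    finally show ?thesis
      unfolding eucl_norm_def Mexp_vec[OF A psi] y_def[symmetric] using y by simp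
  qed
  have "\<forall>t\<ge>0. restr_exp_norm (sys_mat N m \<alpha> V) (L_minus N m \<alpha> V) t \<le> C * exp (- \<beta> * t)"
  proof (intro allI impI)
    fix t :: real assume t: "t \<ge> 0"
    show "restr_exp_norm (sys_mat N m \<alpha> V) (L_minus N m \<alpha> V) t \<le> C * exp (- \<beta> * t)"
      unfolding restr_exp_norm_def A_def[symmetric]
    proof (rule cSup_least)
      show "{eucl_norm (exp_mat_vec A t \<psi>) |\<psi>. \<psi> \<in> L_minus N m \<alpha> V \<and> eucl_norm \<psi> \<le> 1} \<noteq> {}"
      proof -
        have "eucl_norm (0\<^sub>v n :: real vec) \<le> 1" unfolding eucl_norm_def by simp
        thus ?thesis using zeroL by blast
      qed
    qed (use bound[OF t] in blast)
  qed
  thus ?thesis using bpos by blast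
qed



lemma rot_arith:
  fixes X1 Y1 U1 W1 X2 Y2 U2 W2 k :: real
  assumes "X1 + Y1 = k * (U1 + W1)" "X2 + Y2 = k * (U2 + W2)"
  shows "(1/2 * X1 + 1/2 * X2) + (1/2 * Y1 + 1/2 * Y2) = k * ((1/2 * U1 + 1/2 * U2) + (1/2 * W1 + 1/2 * W2))"
proof -
  have "(1/2 * X1 + 1/2 * X2) + (1/2 * Y1 + 1/2 * Y2) = 1/2 * (X1 + Y1) + 1/2 * (X2 + Y2)" by (simp only: distrib_left add_ac)
  also have "\<dots> = 1/2 * (k * (U1 + W1)) + 1/2 * (k * (U2 + W2))" using assms by simp
  also have "\<dots> = k * ((1/2 * U1 + 1/2 * U2) + (1/2 * W1 + 1/2 * W2))" by (simp add: algebra_simps)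
  finally show ?thesis .
qed

lemma energy_rot:
  assumes x: "\<And>i. i < 2*N \<Longrightarrow> x$i = R * u$i - S * v$i"
    and y: "\<And>i. i < 2*N \<Longrightarrow> y$i = S * u$i + R * v$i"
  shows "energy N V x + energy N V y = (R\<^sup>2 + S\<^sup>2) * (energy N V u + energy N V v)"
proof -
  have A1: "(\<Sum>i<N. (x$(N+i))\<^sup>2) + (\<Sum>i<N. (y$(N+i))\<^sup>2) = (R\<^sup>2 + S\<^sup>2) * ((\<Sum>i<N. (u$(N+i))\<^sup>2) + (\<Sum>i<N. (v$(N+i))\<^sup>2))"
    unfolding sum.distrib[symmetric] sum_distrib_left
  proof (intro sum.cong refl)
    fix i assume "i \<in> {..<N}"
    hence "N + i < 2*N" by simp
    thus "(x$(N+i))\<^sup>2 + (y$(N+i))\<^sup>2 = (R\<^sup>2 + S\<^sup>2) * ((u$(N+i))\<^sup>2 + (v$(N+i))\<^sup>2)"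
      by (simp add: x y power2_eq_square algebra_simps)
  qed
  have A2: "(\<Sum>i<N. \<Sum>j<N. V $$ (j,i) * x $ i * x $ j) + (\<Sum>i<N. \<Sum>j<N. V $$ (j,i) * y $ i * y $ j)
      = (R\<^sup>2 + S\<^sup>2) * ((\<Sum>i<N. \<Sum>j<N. V $$ (j,i) * u $ i * u $ j) + (\<Sum>i<N. \<Sum>j<N. V $$ (j,i) * v $ i * v $ j))"
    unfolding sum.distrib[symmetric] sum_distrib_left
  proof (intro sum.cong refl)
    fix i j assume "i \<in> {..<N}" "j \<in> {..<N}"
    hence "i < 2*N" "j < 2*N" by auto
    thus "V $$ (j,i) * x $ i * x $ j + V $$ (j,i) * y $ i * y $ j = (R\<^sup>2 + S\<^sup>2) * (V $$ (j,i) * u $ i * u $ j + V $$ (j,i) * v $ i * v $ j)"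
      by (simp add: x y power2_eq_square algebra_simps)
  qed
  show ?thesis unfolding energy_def by (rule rot_arith[OF A1 A2])
qed

lemma part1:
  fixes N m :: nat and \<alpha> :: real and V :: "real mat"
  assumes N1: "1 \<le> N" and pd: "symmetric_posdef N V"
  shows "\<forall>c \<in> restr_spectrum (2*N) (sys_mat N m \<alpha> V) (L_minus N m \<alpha> V). Re c < 0"
proof
  fix c assume "c \<in> restr_spectrum (2*N) (sys_mat N m \<alpha> V) (L_minus N m \<alpha> V)"
  define A where "A = sys_mat N m \<alpha> V"
  define n where "n = 2*N"
  have V: "V \<in> carrier_mat N N" using pd unfolding symmetric_posdef_def by auto
  have A: "A \<in> carrier_mat n n" unfolding A_def n_def by (rule sys_carrier[OF V])
  obtain z where z: "z \<in> carrier_vec n" "z \<noteq> 0\<^sub>v n"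
    and uL: "vec n (\<lambda>i. Re (z $ i)) \<in> L_minus N m \<alpha> V" and vL: "vec n (\<lambda>i. Im (z $ i)) \<in> L_minus N m \<alpha> V"
    and ev: "map_mat complex_of_real A *\<^sub>v z = c \<cdot>\<^sub>v z"
    using \<open>c \<in> _\<close> unfolding restr_spectrum_def A_def[symmetric] n_def[symmetric] by blast
  define u where "u = vec n (\<lambda>i. Re (z $ i))"
  define v where "v = vec n (\<lambda>i. Im (z $ i))"
  have u: "u \<in> carrier_vec n" and v: "v \<in> carrier_vec n" unfolding u_def v_def by auto
  obtain \<mu> where mu: "\<mu> > 0" "\<And>\<psi>. \<psi> \<in> carrier_vec n \<Longrightarrow> energy N V \<psi> \<ge> \<mu> * (\<Sum>k<n. (\<psi>$k)\<^sup>2)"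
    using energy_lower[OF pd N1] unfolding n_def by blast
  have AC: "map_mat complex_of_real A \<in> carrier_mat n n" using A by simp
  have e1: "(A *\<^sub>v u) $ i = Re c * u $ i - Im c * v $ i \<and> (A *\<^sub>v v) $ i = Im c * u $ i + Re c * v $ i"
    if i: "i < n" for i
  proof -
    have "(\<Sum>l<n. complex_of_real (A $$ (i,l)) * z $ l) = c * z $ i"
      using mult_vec_entry[OF AC z(1) i] ev i z(1) A by simp
    hence "Re (\<Sum>l<n. complex_of_real (A $$ (i,l)) * z $ l) = Re (c * z $ i)"
      "Im (\<Sum>l<n. complex_of_real (A $$ (i,l)) * z $ l) = Im (c * z $ i)" by simp_all
    hence re: "(\<Sum>l<n. A $$ (i,l) * Re (z $ l)) = Re c * Re (z $ i) - Im c * Im (z $ i)"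
      and im: "(\<Sum>l<n. A $$ (i,l) * Im (z $ l)) = Re c * Im (z $ i) + Im c * Re (z $ i)"
      by (simp_all add: Re_sum Im_sum)
    have "(A *\<^sub>v u) $ i = (\<Sum>l<n. A $$ (i,l) * Re (z $ l))"
      using mult_vec_entry[OF A u i] unfolding u_def by simp
    moreover have "(A *\<^sub>v v) $ i = (\<Sum>l<n. A $$ (i,l) * Im (z $ l))"
      using mult_vec_entry[OF A v i] unfolding v_def by simp
    ultimately show ?thesis using re im i unfolding u_def v_def by (simp add: algebra_simps)
  qed
  have lin: "(A *\<^sub>v w) $ i = r * (A *\<^sub>v u) $ i - s * (A *\<^sub>v v) $ i"
    if w: "w \<in> carrier_vec n" and wl: "\<And>l. l < n \<Longrightarrow> w $ l = r * u $ l - s * v $ l" and i: "i < n" for w r s i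
  proof -
    have "(A *\<^sub>v w) $ i = (\<Sum>l<n. A $$ (i,l) * (r * u $ l - s * v $ l))"
      unfolding mult_vec_entry[OF A w i] by (intro sum.cong refl) (simp add: wl)
    also have "\<dots> = r * (\<Sum>l<n. A $$ (i,l) * u $ l) - s * (\<Sum>l<n. A $$ (i,l) * v $ l)"
      by (simp add: sum_subtractf sum_distrib_left algebra_simps)
    finally show ?thesis unfolding mult_vec_entry[OF A u i] mult_vec_entry[OF A v i] .
  qed
  have pw: "\<forall>i<n. (A ^\<^sub>m k *\<^sub>v u) $ i = Re (c^k) * u $ i - Im (c^k) * v $ i \<and>
                   (A ^\<^sub>m k *\<^sub>v v) $ i = Im (c^k) * u $ i + Re (c^k) * v $ i" for k
  proof (induction k)
    case 0
    show ?case using A u v by simp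
  next
    case (Suc k)
    show ?case
    proof (intro allI impI)
      fix i assume i: "i < n"
      have wu: "A ^\<^sub>m Suc k *\<^sub>v u = A *\<^sub>v (A ^\<^sub>m k *\<^sub>v u)"
        unfolding pow_mat_Suc_left[OF A] using A u by (intro assoc_mult_mat_vec) auto
      have wv: "A ^\<^sub>m Suc k *\<^sub>v v = A *\<^sub>v (A ^\<^sub>m k *\<^sub>v v)"
        unfolding pow_mat_Suc_left[OF A] using A v by (intro assoc_mult_mat_vec) auto
      have cu: "A ^\<^sub>m k *\<^sub>v u \<in> carrier_vec n" "A ^\<^sub>m k *\<^sub>v v \<in> carrier_vec n"
        by (rule mult_mat_vec_carrier[OF pow_carrier_mat[OF A] u], rule mult_mat_vec_carrier[OF pow_carrier_mat[OF A] v])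
      have 1: "(A ^\<^sub>m Suc k *\<^sub>v u) $ i = Re (c^k) * (A *\<^sub>v u) $ i - Im (c^k) * (A *\<^sub>v v) $ i"
        unfolding wu by (rule lin[where r="Re (c^k)" and s="Im (c^k)", OF cu(1) _ i]) (use Suc in blast)
      have v2: "(A ^\<^sub>m k *\<^sub>v v) $ l = Im (c^k) * u $ l - (- Re (c^k)) * v $ l" if l: "l < n" for l
      proof -
        from Suc l have h: "(A ^\<^sub>m k *\<^sub>v v) $ l = Im (c^k) * u $ l + Re (c^k) * v $ l" by blast
        show ?thesis unfolding h by simp
      qed
      have 2: "(A ^\<^sub>m Suc k *\<^sub>v v) $ i = Im (c^k) * (A *\<^sub>v u) $ i - (- Re (c^k)) * (A *\<^sub>v v) $ i"
        unfolding wv by (rule lin[OF cu(2) v2 i])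
      show "(A ^\<^sub>m Suc k *\<^sub>v u) $ i = Re (c ^ Suc k) * u $ i - Im (c ^ Suc k) * v $ i \<and>
            (A ^\<^sub>m Suc k *\<^sub>v v) $ i = Im (c ^ Suc k) * u $ i + Re (c ^ Suc k) * v $ i"
      proof -
        from e1[OF i] have au: "(A *\<^sub>v u) $ i = Re c * u $ i - Im c * v $ i"
          and av: "(A *\<^sub>v v) $ i = Im c * u $ i + Re c * v $ i" by auto
        show ?thesis unfolding 1 2 au av by (simp add: algebra_simps)
      qed
    qed
  qed
  define R where "R t = Re (exp (c * of_real t))" for t
  define S where "S t = Im (exp (c * of_real t))" for t
  have ex: "(exp_mat_vec A t u) $ i = R t * u $ i - S t * v $ i \<and> (exp_mat_vec A t v) $ i = S t * u $ i + R t * v $ i"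
    if i: "i < n" for t i
  proof -
    define g where "g k = (c * of_real t)^k /\<^sub>R fact k" for k
    have gs: "g sums exp (c * of_real t)" unfolding g_def by (rule exp_converges)
    have gre: "(\<lambda>k. t^k / fact k * Re (c^k)) sums R t"
      using sums_Re[OF gs] unfolding R_def g_def by (simp add: power_mult_distrib mult_ac divide_inverse)
    have gim: "(\<lambda>k. t^k / fact k * Im (c^k)) sums S t"
      using sums_Im[OF gs] unfolding S_def g_def by (simp add: power_mult_distrib mult_ac divide_inverse)
    have "(\<lambda>k. t^k / fact k * (A ^\<^sub>m k *\<^sub>v u) $ i) = (\<lambda>k. u $ i * (t^k / fact k * Re (c^k)) - v $ i * (t^k / fact k * Im (c^k)))"
    proof (rule ext)
      fix k from pw[of k] i have h: "(A ^\<^sub>m k *\<^sub>v u) $ i = Re (c^k) * u $ i - Im (c^k) * v $ i" by blast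
      show "t^k / fact k * (A ^\<^sub>m k *\<^sub>v u) $ i = u $ i * (t^k / fact k * Re (c^k)) - v $ i * (t^k / fact k * Im (c^k))"
        unfolding h by (simp add: algebra_simps)
    qed
    moreover have "(\<lambda>k. u $ i * (t^k / fact k * Re (c^k)) - v $ i * (t^k / fact k * Im (c^k))) sums (u $ i * R t - v $ i * S t)"
      by (intro sums_diff sums_mult gre gim)
    moreover have "(\<lambda>k. t^k / fact k * (A ^\<^sub>m k *\<^sub>v v) $ i) = (\<lambda>k. u $ i * (t^k / fact k * Im (c^k)) + v $ i * (t^k / fact k * Re (c^k)))"
    proof (rule ext)
      fix k from pw[of k] i have h: "(A ^\<^sub>m k *\<^sub>v v) $ i = Im (c^k) * u $ i + Re (c^k) * v $ i" by blast
      show "t^k / fact k * (A ^\<^sub>m k *\<^sub>v v) $ i = u $ i * (t^k / fact k * Im (c^k)) + v $ i * (t^k / fact k * Re (c^k))"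
        unfolding h by (simp add: algebra_simps)
    qed
    moreover have "(\<lambda>k. u $ i * (t^k / fact k * Im (c^k)) + v $ i * (t^k / fact k * Re (c^k))) sums (u $ i * S t + v $ i * R t)"
      by (intro sums_add sums_mult gre gim)
    ultimately show ?thesis using i u v unfolding exp_mat_vec_def by (auto simp: sums_iff algebra_simps)
  qed
  have rot: "energy N V (exp_mat_vec A t u) + energy N V (exp_mat_vec A t v) = ((R t)\<^sup>2 + (S t)\<^sup>2) * (energy N V u + energy N V v)" for t
    by (rule energy_rot) (use ex in \<open>auto simp: n_def\<close>)
  show "Re c < 0"
  proof (rule ccontr)
    assume "\<not> Re c < 0"
    hence rc: "Re c \<ge> 0" by simp
    have RS: "(R t)\<^sup>2 + (S t)\<^sup>2 \<ge> 1" if t: "t \<ge> 0" for t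
    proof -
      have "(R t)\<^sup>2 + (S t)\<^sup>2 = (cmod (exp (c * of_real t)))\<^sup>2" unfolding R_def S_def cmod_power2 ..
      also have "\<dots> = (exp (Re c * t))\<^sup>2" by simp
      also have "\<dots> \<ge> 1" using rc t by simp
      finally show ?thesis .
    qed
    obtain i where i: "i < n" "z $ i \<noteq> 0"
    proof -
      have "\<exists>i<n. z $ i \<noteq> 0"
      proof (rule ccontr)
        assume "\<not> (\<exists>i<n. z $ i \<noteq> 0)"
        hence "z = 0\<^sub>v n" using z(1) by (intro eq_vecI) auto
        thus False using z(2) by simp
      qed
      thus ?thesis using that by blast
    qed
    have pos: "energy N V u + energy N V v > 0"
    proof -
      have en: "energy N V w \<ge> \<mu> * (w $ i)\<^sup>2" if "w \<in> carrier_vec n" for w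
      proof -
        have "(w $ i)\<^sup>2 \<le> (\<Sum>k<n. (w$k)\<^sup>2)" using i by (intro member_le_sum) auto
        thus ?thesis using mu(2)[OF that] mu(1) by (meson mult_left_mono less_imp_le order.trans)
      qed
      have "(u $ i)\<^sup>2 + (v $ i)\<^sup>2 > 0"
        using i unfolding u_def v_def by (auto simp: complex_eq_iff add_pos_nonneg add_nonneg_pos)
      hence "\<mu> * (u $ i)\<^sup>2 + \<mu> * (v $ i)\<^sup>2 > 0" using mu(1) by (simp add: distrib_left[symmetric])
      thus ?thesis using en[OF u] en[OF v] by linarith
    qed
    have lu: "((\<lambda>t. energy N V (exp_mat_vec A t u)) \<longlongrightarrow> 0) at_top"
      using uL unfolding L_minus_def u_def A_def n_def by simp
    have lv: "((\<lambda>t. energy N V (exp_mat_vec A t v)) \<longlongrightarrow> 0) at_top"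
      using vL unfolding L_minus_def v_def A_def n_def by simp
    have lim: "((\<lambda>t. energy N V (exp_mat_vec A t u) + energy N V (exp_mat_vec A t v)) \<longlongrightarrow> 0) at_top"
      using tendsto_add[OF lu lv] by simp
    have "eventually (\<lambda>t. energy N V u + energy N V v \<le> energy N V (exp_mat_vec A t u) + energy N V (exp_mat_vec A t v)) at_top"
      unfolding eventually_at_top_linorder
    proof (intro exI[of _ 0] allI impI)
      fix t :: real assume "t \<ge> 0"
      hence "1 * (energy N V u + energy N V v) \<le> ((R t)\<^sup>2 + (S t)\<^sup>2) * (energy N V u + energy N V v)"
        using RS pos by (intro mult_right_mono) auto
      thus "energy N V u + energy N V v \<le> energy N V (exp_mat_vec A t u) + energy N V (exp_mat_vec A t v)"
        using rot[of t] by simp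
    qed
    hence "energy N V u + energy N V v \<le> 0" using tendsto_lowerbound[OF lim] by simp
    thus False using pos by simp
  qed
qed

theorem lemma2:
  fixes N m :: nat and \<alpha> :: real and V :: "real mat"
  assumes "1 \<le> N" and "1 \<le> m" and "m \<le> N" and "\<alpha> > 0"
    and "symmetric_posdef N V"
  shows "(\<forall>c \<in> restr_spectrum (2*N) (sys_mat N m \<alpha> V) (L_minus N m \<alpha> V). Re c < 0)
    \<and> (\<exists>C \<beta>. \<beta> > 0 \<and> (\<forall>t \<ge> 0.
         restr_exp_norm (sys_mat N m \<alpha> V) (L_minus N m \<alpha> V) t \<le> C * exp (- \<beta> * t)))"
  using part1[OF assms(1) assms(5), of m \<alpha>] part2[OF assms(1) less_imp_le[OF assms(4)] assms(5), of m] by blast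

end
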